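(* Let $\Theta$ be a parameter space. For a set function $C:[0,1]\to2^{\Theta}$, $C\in\mathrm{ECI}(\Theta)$ if and only if $C$ is nonincreasing and continuous from above (i.e. $C(\alpha)=\bigcup_{\beta>\alpha}C(\beta)$ for every $\alpha\in[0,1)$).
   Context: The underlying probability space is assumed to carry a random variable $U$ that is standard uniform under every parameter $\theta\in\Theta$. An e-value family for $\Theta$ is $(E(\theta))_{\theta\in\Theta}$ with $E(\theta)\ge0$ and $\mathbb{E}_\theta[E(\theta)]\le1$ for every $\theta$. $\mathrm{ECI}(\Theta)$ is the set of all $C:[0,1]\to2^\Theta$ that are a possible realization of an e-CI, i.e. for which there exists an e-value family $E$ and a possible realization of it (under some true parameter $\theta^*\in\Theta$) such that $C(\alpha)=\{\theta\in\Theta:E(\theta)<1/\alpha\}$ for all $\alpha\in[0,1)$, with the convention $1/0=\infty$. *)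

theory Defs
  imports "HOL-Probability.Probability"
begin

text \<open>The parameter space Theta is the (nonempty) type 'p.  The statistical model is a
  family of probability measures M theta on a common measurable space (sample space 'o).
  e-values are extended nonnegative reals (ennreal), so that 1/0 = infinity is handled
  via inverse 0 = top.\<close>

definition model_with_uniform :: "('p \<Rightarrow> 'o measure) \<Rightarrow> ('o \<Rightarrow> real) \<Rightarrow> bool" where
  "model_with_uniform M U \<longleftrightarrow>
     (\<forall>\<theta>. prob_space (M \<theta>)) \<and>
     (\<forall>\<theta> \<theta>'. sets (M \<theta>) = sets (M \<theta>') \<and> space (M \<theta>) = space (M \<theta>')) \<and>
     (\<forall>\<theta>. U \<in> borel_measurable (M \<theta>) \<and>
           distr (M \<theta>) lborel U = uniform_measure lborel {0..1})"

definition e_value_family :: "('p \<Rightarrow> 'o measure) \<Rightarrow> ('p \<Rightarrow> 'o \<Rightarrow> ennreal) \<Rightarrow> bool" where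
  "e_value_family M E \<longleftrightarrow>
     (\<forall>\<theta>. E \<theta> \<in> borel_measurable (M \<theta>) \<and> (\<integral>\<^sup>+ \<omega>. E \<theta> \<omega> \<partial>M \<theta>) \<le> 1)"

text \<open>Set functions C : [0,1] -> 2^Theta are represented as real => 'p set; only the
  values on [0,1] matter.\<close>

definition ECI :: "('p \<Rightarrow> 'o measure) \<Rightarrow> (real \<Rightarrow> 'p set) set" where
  "ECI M = {C. \<exists>E \<theta>s \<omega>. e_value_family M E \<and> \<omega> \<in> space (M \<theta>s) \<and>
      (\<forall>\<alpha>\<in>{0..1}. C \<alpha> = {\<theta>. E \<theta> \<omega> < inverse (ennreal \<alpha>)})}"

end

theory Submission
  imports Defs
begin

lemma inv_less:
  assumes "0 \<le> (a::real)"
  shows "(e < inverse (ennreal a)) \<longleftrightarrow> (e \<noteq> \<top> \<and> enn2real e * a < 1)"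
proof (cases "a = 0")
  case True
  then show ?thesis by (simp add: top.not_eq_extremum)
next
  case False
  then have a: "a > 0" using assms by simp
  have inv: "inverse (ennreal a) = ennreal (inverse a)" using a by (simp add: inverse_ennreal)
  show ?thesis
  proof (cases "e = \<top>")
    case True then show ?thesis by (simp add: inv)
  next
    case False
    then obtain x where x: "e = ennreal x" "x \<ge> 0" by (cases e) auto
    have "(ennreal x < ennreal (inverse a)) \<longleftrightarrow> x < inverse a"
      using a x(2) by (simp add: ennreal_less_iff)
    also have "\<dots> \<longleftrightarrow> x * a < 1" using a by (simp add: field_simps)
    finally show ?thesis using x inv by simp
  qed
qed

lemma inv_anti:
  assumes "0 \<le> (a::real)" "a \<le> b"
  shows "inverse (ennreal b) \<le> inverse (ennreal a)"
proof (cases "a = 0")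
  case True then show ?thesis by simp
next
  case False
  then have a: "a > 0" using assms by simp
  then have "b > 0" using assms by simp
  then show ?thesis using a assms by (simp add: inverse_ennreal ennreal_leI le_imp_inverse_le)
qed

theorem lemma1:
  fixes M :: "'p \<Rightarrow> 'o measure" and U :: "'o \<Rightarrow> real" and C :: "real \<Rightarrow> 'p set"
  assumes "model_with_uniform M U"
  shows "C \<in> ECI M \<longleftrightarrow>
    ((\<forall>\<alpha> \<beta>. 0 \<le> \<alpha> \<longrightarrow> \<alpha> \<le> \<beta> \<longrightarrow> \<beta> \<le> 1 \<longrightarrow> C \<beta> \<subseteq> C \<alpha>) \<and>
     (\<forall>\<alpha>\<in>{0..<1}. C \<alpha> = (\<Union>\<beta>\<in>{\<alpha><..1}. C \<beta>)))"
proof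
  assume "C \<in> ECI M"
  then obtain E \<theta>s \<omega> where C: "\<And>\<alpha>. \<alpha> \<in> {0..1} \<Longrightarrow> C \<alpha> = {\<theta>. E \<theta> \<omega> < inverse (ennreal \<alpha>)}"
    unfolding ECI_def by blast
  have mono: "C \<beta> \<subseteq> C \<alpha>" if "0 \<le> \<alpha>" "\<alpha> \<le> \<beta>" "\<beta> \<le> 1" for \<alpha> \<beta>
    using that C[of \<alpha>] C[of \<beta>] inv_anti[of \<alpha> \<beta>] by auto
  show "(\<forall>\<alpha> \<beta>. 0 \<le> \<alpha> \<longrightarrow> \<alpha> \<le> \<beta> \<longrightarrow> \<beta> \<le> 1 \<longrightarrow> C \<beta> \<subseteq> C \<alpha>) \<and>
     (\<forall>\<alpha>\<in>{0..<1}. C \<alpha> = (\<Union>\<beta>\<in>{\<alpha><..1}. C \<beta>))"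
  proof (intro conjI allI impI ballI)
    fix \<alpha> \<beta> :: real assume "0 \<le> \<alpha>" "\<alpha> \<le> \<beta>" "\<beta> \<le> 1"
    then show "C \<beta> \<subseteq> C \<alpha>" by (rule mono)
  next
    fix \<alpha> :: real assume a: "\<alpha> \<in> {0..<1}"
    show "C \<alpha> = (\<Union>\<beta>\<in>{\<alpha><..1}. C \<beta>)"
    proof
      show "(\<Union>\<beta>\<in>{\<alpha><..1}. C \<beta>) \<subseteq> C \<alpha>"
      proof safe
        fix \<theta> \<beta> assume "\<beta> \<in> {\<alpha><..1}" "\<theta> \<in> C \<beta>"
        then show "\<theta> \<in> C \<alpha>" using mono[of \<alpha> \<beta>] a by auto
      qed
    next
      show "C \<alpha> \<subseteq> (\<Union>\<beta>\<in>{\<alpha><..1}. C \<beta>)"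
      proof
        fix \<theta> assume "\<theta> \<in> C \<alpha>"
        then have "E \<theta> \<omega> < inverse (ennreal \<alpha>)" using C[of \<alpha>] a by auto
        then have ne: "E \<theta> \<omega> \<noteq> \<top>" and lt: "enn2real (E \<theta> \<omega>) * \<alpha> < 1"
          using inv_less[of \<alpha>] a by auto
        define x where "x = enn2real (E \<theta> \<omega>)"
        have x0: "x \<ge> 0" unfolding x_def by simp
        define \<beta> where "\<beta> = min 1 (\<alpha> + (1 - x * \<alpha>) / (2 * (x + 1)))"
        have pos: "(1 - x * \<alpha>) / (2 * (x + 1)) > 0" using lt x0 unfolding x_def by (intro divide_pos_pos) (auto simp add: enn2real_nonneg add_nonneg_pos)
        have b1: "\<alpha> < \<beta>" "\<beta> \<le> 1" unfolding \<beta>_def using a pos by auto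
        have "x * \<beta> \<le> x * (\<alpha> + (1 - x * \<alpha>) / (2 * (x + 1)))"
          unfolding \<beta>_def using x0 by (simp add: mult_left_mono)
        also have "\<dots> = x * \<alpha> + (1 - x * \<alpha>) * (x / (2 * (x + 1)))"
          by (simp add: algebra_simps)
        also have "\<dots> < x * \<alpha> + (1 - x * \<alpha>) * 1"
        proof -
          have "x / (2 * (x + 1)) < 1" using x0 by (simp add: field_simps)
          moreover have "1 - x * \<alpha> > 0" using lt x_def by simp
          ultimately show ?thesis
            using mult_strict_left_mono[of "x / (2 * (x + 1))" 1 "1 - x * \<alpha>"] by linarith
        qed
        finally have "x * \<beta> < 1" by simp
        then have "E \<theta> \<omega> < inverse (ennreal \<beta>)"
          using inv_less[of \<beta>] ne b1 a x_def by auto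
        then have "\<theta> \<in> C \<beta>" using C[of \<beta>] b1 a by auto
        then show "\<theta> \<in> (\<Union>\<beta>\<in>{\<alpha><..1}. C \<beta>)" using b1 by auto
      qed
    qed
  qed
next
  assume H: "(\<forall>\<alpha> \<beta>. 0 \<le> \<alpha> \<longrightarrow> \<alpha> \<le> \<beta> \<longrightarrow> \<beta> \<le> 1 \<longrightarrow> C \<beta> \<subseteq> C \<alpha>) \<and>
     (\<forall>\<alpha>\<in>{0..<1}. C \<alpha> = (\<Union>\<beta>\<in>{\<alpha><..1}. C \<beta>))"
  have mono: "C \<beta> \<subseteq> C \<alpha>" if "0 \<le> \<alpha>" "\<alpha> \<le> \<beta>" "\<beta> \<le> 1" for \<alpha> \<beta>
    using H that by blast
  have cont: "\<exists>\<beta>\<in>{\<alpha><..1}. \<theta> \<in> C \<beta>" if "\<alpha> \<in> {0..<1}" "\<theta> \<in> C \<alpha>" for \<alpha> \<theta>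
    using H that by blast
  define e where "e \<theta> = (SUP \<alpha>\<in>{\<alpha>\<in>{0..1}. \<theta> \<notin> C \<alpha>}. inverse (ennreal \<alpha>))" for \<theta>
  have key: "C \<alpha> = {\<theta>. e \<theta> < inverse (ennreal \<alpha>)}" if a: "\<alpha> \<in> {0..1}" for \<alpha>
  proof safe
    fix \<theta> assume th: "\<theta> \<in> C \<alpha>"
    obtain \<beta> where b: "\<alpha> < \<beta> \<or> \<alpha> = 1" "\<beta> \<in> {\<alpha>..1}" "\<theta> \<in> C \<beta>"
    proof (cases "\<alpha> = 1")
      case True then show ?thesis using that th by auto
    next
      case False
      then obtain \<beta> where "\<beta> \<in> {\<alpha><..1}" "\<theta> \<in> C \<beta>" using cont[of \<alpha> \<theta>] a th by auto
      then show ?thesis using that by auto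
    qed
    show "e \<theta> < inverse (ennreal \<alpha>)"
    proof (cases "\<alpha> = 1")
      case True
      have emp: "{\<alpha>\<in>{0..1}. \<theta> \<notin> C \<alpha>} = {}" using mono th True by fastforce
      have "e \<theta> = 0" unfolding e_def emp by (simp add: bot_ennreal)
      then show ?thesis using True by simp
    next
      case False
      then have ab: "\<alpha> < \<beta>" using b by auto
      have "e \<theta> \<le> inverse (ennreal \<beta>)" unfolding e_def
      proof (rule SUP_least)
        fix \<gamma> assume g: "\<gamma> \<in> {\<alpha>\<in>{0..1}. \<theta> \<notin> C \<alpha>}"
        have "\<beta> \<le> \<gamma>"
        proof (rule ccontr)
          assume "\<not> \<beta> \<le> \<gamma>"
          then have "C \<beta> \<subseteq> C \<gamma>" using mono[of \<gamma> \<beta>] g b by auto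
          then show False using g b by auto
        qed
        then show "inverse (ennreal \<gamma>) \<le> inverse (ennreal \<beta>)"
          using inv_anti[of \<beta> \<gamma>] a ab by auto
      qed
      also have "\<dots> < inverse (ennreal \<alpha>)"
      proof -
        have bp: "\<beta> > 0" using a ab by auto
        then have "inverse (ennreal \<beta>) = ennreal (inverse \<beta>)" by (simp add: inverse_ennreal)
        moreover have "inverse \<beta> * \<alpha> < 1" using bp ab a by (simp add: field_simps)
        ultimately show ?thesis using inv_less[of \<alpha> "inverse (ennreal \<beta>)"] a bp by simp
      qed
      finally show ?thesis .
    qed
  next
    fix \<theta> assume lt: "e \<theta> < inverse (ennreal \<alpha>)"
    show "\<theta> \<in> C \<alpha>"
    proof (rule ccontr)
      assume "\<theta> \<notin> C \<alpha>"
      then have "inverse (ennreal \<alpha>) \<le> e \<theta>" unfolding e_def using a by (auto intro: SUP_upper)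
      then show False using lt by simp
    qed
  qed
  from assms have ps: "\<And>\<theta>. prob_space (M \<theta>)"
    and sp: "\<And>\<theta> \<theta>'. sets (M \<theta>) = sets (M \<theta>') \<and> space (M \<theta>) = space (M \<theta>')"
    and Um: "\<And>\<theta>. U \<in> borel_measurable (M \<theta>)"
    and Ud: "\<And>\<theta>. distr (M \<theta>) lborel U = uniform_measure lborel {0..1}"
    unfolding model_with_uniform_def by auto
  obtain \<theta>s :: 'p where True by simp
  have "space (M \<theta>s) \<noteq> {}" using ps[of \<theta>s] by (simp add: prob_space.not_empty)
  then obtain \<omega> where om: "\<omega> \<in> space (M \<theta>s)" by blast
  define A where "A \<theta> = U -` {U \<omega>} \<inter> space (M \<theta>)" for \<theta>
  have Asets: "A \<theta> \<in> sets (M \<theta>)" for \<theta>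
    unfolding A_def using Um[of \<theta>] by (simp add: measurable_sets)
  have A0: "emeasure (M \<theta>) (A \<theta>) = 0" for \<theta>
  proof -
    have "emeasure (M \<theta>) (A \<theta>) = emeasure (distr (M \<theta>) lborel U) {U \<omega>}"
      unfolding A_def using Um[of \<theta>] by (simp add: emeasure_distr)
    also have "\<dots> = emeasure lborel ({0..1} \<inter> {U \<omega>}) / emeasure lborel {0..1::real}"
      unfolding Ud by simp
    also have "emeasure lborel ({0..1} \<inter> {U \<omega>}) = 0"
      by (rule emeasure_eq_0[of "{U \<omega>}"]) auto
    finally show ?thesis by simp
  qed
  define E where "E \<theta> \<omega>' = e \<theta> * indicator (A \<theta>) \<omega>'" for \<theta> \<omega>'
  have ev: "e_value_family M E"
    unfolding e_value_family_def E_def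
  proof (intro allI conjI)
    fix \<theta>
    show "(\<lambda>\<omega>'. e \<theta> * indicator (A \<theta>) \<omega>') \<in> borel_measurable (M \<theta>)"
      using Asets[of \<theta>] by measurable
    show "(\<integral>\<^sup>+ \<omega>'. e \<theta> * indicator (A \<theta>) \<omega>' \<partial>M \<theta>) \<le> 1"
      using Asets[of \<theta>] A0[of \<theta>] by (simp add: nn_integral_cmult_indicator)
  qed
  have Ee: "E \<theta> \<omega> = e \<theta>" for \<theta>
    unfolding E_def A_def using om sp[of \<theta> \<theta>s] by simp
  have "\<forall>\<alpha>\<in>{0..1}. C \<alpha> = {\<theta>. E \<theta> \<omega> < inverse (ennreal \<alpha>)}"
    using key by (simp add: Ee)
  then show "C \<in> ECI M" unfolding ECI_def using ev om by blast
qed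

end
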